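(* In the basic hexagonal model, for a cell $c$ with set of direct neighbours $\mathcal{N}_c$, given the ignition times $\tau(n)$ for all $n\in\mathcal{N}_c$ (together with the initial values $x(c,0)$ and $y(n,0)$), the ignition time $\tau(c)$ can be calculated in constant time.
   Context: Basic hexagonal model: cells are hexagons, each with at most $6$ direct neighbours (cells sharing an edge). The state of cell $c$ at time $t\in\mathbb{N}$ is a pair of non-negative integers $x(c,t)$, $y(c,t)$; $c$ is burning if $x(c,t)=0<y(c,t)$, alive if $x(c,t),y(c,t)>0$, dead if $y(c,t)=0$. Transition: an alive cell's $x$-value decreases by the number of burning neighbours (clipped at $0$); a burning cell's $y$-value decreases by $1$. The ignition time $\tau(c)\in\mathbb{N}\cup\{\infty\}$ is the minimum $t$ with $x(c,t)=0$ ($\infty$ if none); it satisfies $\tau(c)=\min\{t\in\mathbb{N}: x(c,0)\le\sum_{n\in\mathcal{N}_c}\max(0,\min(t-\tau(n),y(n,0)))\}$, with $\tau(c)=\infty$ if this set is empty. Arithmetic operations on numbers take constant time. *)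

theory Defs
  imports Main "HOL-Library.Extended_Nat"
begin

text \<open>A neighbour is described by its ignition time tau(n) (an extended natural,
  infinity = never ignites) and its initial y-value y(n,0).\<close>

definition contrib :: "nat \<Rightarrow> enat \<times> nat \<Rightarrow> int" where
  "contrib t n = (case fst n of
       \<infinity> \<Rightarrow> 0
     | enat a \<Rightarrow> max 0 (min (int t - int a) (int (snd n))))"

definition ign_time :: "nat \<Rightarrow> (enat \<times> nat) list \<Rightarrow> enat" where
  "ign_time x ns =
     (if \<exists>t. int x \<le> sum_list (map (contrib t) ns)
      then enat (LEAST t. int x \<le> sum_list (map (contrib t) ns))
      else \<infinity>)"

datatype expr =
    Const int
  | XIn
  | TauIn nat           (* tau of the i-th neighbour (meaningful when finite) *)
  | YIn nat
  | Add expr expr | Sub expr expr | Mul expr expr | Div expr expr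

datatype cond = Le expr expr | IsInf nat

datatype prog = Out expr | OutInf | Branch cond prog prog

fun tau_val :: "enat \<Rightarrow> int" where
  "tau_val (enat a) = int a" | "tau_val \<infinity> = 0"

fun eeval :: "expr \<Rightarrow> nat \<Rightarrow> (enat \<times> nat) list \<Rightarrow> int" where
  "eeval (Const k) x ns = k"
| "eeval XIn x ns = int x"
| "eeval (TauIn i) x ns = (if i < length ns then tau_val (fst (ns ! i)) else 0)"
| "eeval (YIn i) x ns = (if i < length ns then int (snd (ns ! i)) else 0)"
| "eeval (Add a b) x ns = eeval a x ns + eeval b x ns"
| "eeval (Sub a b) x ns = eeval a x ns - eeval b x ns"
| "eeval (Mul a b) x ns = eeval a x ns * eeval b x ns"
| "eeval (Div a b) x ns = eeval a x ns div eeval b x ns"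

fun ceval :: "cond \<Rightarrow> nat \<Rightarrow> (enat \<times> nat) list \<Rightarrow> bool" where
  "ceval (Le a b) x ns = (eeval a x ns \<le> eeval b x ns)"
| "ceval (IsInf i) x ns = (i < length ns \<and> fst (ns ! i) = \<infinity>)"

fun run :: "prog \<Rightarrow> nat \<Rightarrow> (enat \<times> nat) list \<Rightarrow> int option" where
  "run (Out e) x ns = Some (eeval e x ns)"
| "run OutInf x ns = None"
| "run (Branch c p q) x ns = (if ceval c x ns then run p x ns else run q x ns)"

fun esize :: "expr \<Rightarrow> nat" where
  "esize (Add a b) = 1 + esize a + esize b"
| "esize (Sub a b) = 1 + esize a + esize b"
| "esize (Mul a b) = 1 + esize a + esize b"
| "esize (Div a b) = 1 + esize a + esize b"
| "esize _ = 1"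

fun csize :: "cond \<Rightarrow> nat" where
  "csize (Le a b) = 1 + esize a + esize b"
| "csize (IsInf i) = 1"

fun cost :: "prog \<Rightarrow> nat" where
  "cost (Out e) = esize e"
| "cost OutInf = 1"
| "cost (Branch c p q) = csize c + max (cost p) (cost q)"

end

theory Submission
  imports Defs
begin


lemma divlem: "(n::int) > 0 \<Longrightarrow> n*(t-1) < N \<Longrightarrow> N \<le> n*t \<Longrightarrow> (N + n - 1) div n = t"
proof -
  assume h: "n > 0" "n*(t-1) < N" "N \<le> n*t"
  define r where "r = N + n - 1 - n*t"
  have r: "0 \<le> r" "r < n" using h by (auto simp: r_def algebra_simps)
  have "N + n - 1 = r + t*n" by (simp add: r_def algebra_simps)
  then have "(N+n-1) div n = r div n + t" using h by simp
  then show ?thesis using r by simp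
qed

lemma neg_div1: "(z::int) < 0 \<Longrightarrow> z div (z*z+1) = -1"
  by (smt (verit) div_add_self2 div_mult_self1 neg_imp_zdiv_neg_iff pos_imp_zdiv_neg_iff)
lemma neg_div2: "(z::int) \<ge> 0 \<Longrightarrow> z div (z*z+1) = 0"
  by (smt (verit, ccfv_SIG) div_pos_pos_trivial mod_mult_self1_is_0
    mod_pos_pos_trivial mult_eq_0_iff ordered_comm_semiring_class.comm_mult_left_mono)

definition eneg :: "expr \<Rightarrow> expr" where
  "eneg e = Div e (Add (Mul e e) (Const 1))"
definition emax0 :: "expr \<Rightarrow> expr" where
  "emax0 e = Mul e (Add (Const 1) (eneg e))"
definition emin :: "expr \<Rightarrow> expr \<Rightarrow> expr" where
  "emin a b = Sub a (emax0 (Sub a b))"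
definition eind :: "expr \<Rightarrow> expr" where
  "eind e = Add (Const 1) (eneg e)"
definition esum :: "(nat \<Rightarrow> expr) \<Rightarrow> nat list \<Rightarrow> expr" where
  "esum f l = foldr (\<lambda>i acc. Add (f i) acc) l (Const 0)"

lemma eeval_eneg: "eeval (eneg e) x ns = (if eeval e x ns < 0 then -1 else 0)"
  by (simp add: eneg_def neg_div1 neg_div2)
lemma eeval_emax0: "eeval (emax0 e) x ns = max 0 (eeval e x ns)"
  by (simp add: emax0_def eeval_eneg)
lemma eeval_emin: "eeval (emin a b) x ns = min (eeval a x ns) (eeval b x ns)"
  by (simp add: emin_def eeval_emax0)
lemma eeval_eind: "eeval (eind e) x ns = (if eeval e x ns \<ge> 0 then 1 else 0)"
  by (simp add: eind_def eeval_eneg)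
lemma eeval_esum: "eeval (esum f l) x ns = (\<Sum>i\<leftarrow>l. eeval (f i) x ns)"
  by (induction l) (simp_all add: esum_def)



definition gf :: "nat list \<Rightarrow> (nat \<Rightarrow> int) \<Rightarrow> (nat \<Rightarrow> int) \<Rightarrow> int \<Rightarrow> int" where
  "gf L a y c = (\<Sum>i\<in>set L. min (max 0 (c - a i)) (y i))"
definition cand :: "(nat \<Rightarrow> int) \<Rightarrow> (nat \<Rightarrow> int) \<Rightarrow> int \<Rightarrow> nat list \<times> nat list \<Rightarrow> int" where
  "cand a y x p = (x - (\<Sum>i\<leftarrow>snd p. y i) + (\<Sum>i\<leftarrow>fst p. a i) + int (length (fst p)) - 1)
      div int (length (fst p))"
definition bigv :: "nat list \<Rightarrow> (nat \<Rightarrow> int) \<Rightarrow> (nat \<Rightarrow> int) \<Rightarrow> int" where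
  "bigv L a y = (\<Sum>i\<leftarrow>L. a i + y i)"
definition self :: "nat list \<Rightarrow> (nat \<Rightarrow> int) \<Rightarrow> (nat \<Rightarrow> int) \<Rightarrow> int \<Rightarrow> int \<Rightarrow> int" where
  "self L a y x c = (if gf L a y c - x \<ge> 0 then c else bigv L a y)"
definition resv :: "nat list \<Rightarrow> (nat \<Rightarrow> int) \<Rightarrow> (nat \<Rightarrow> int) \<Rightarrow> int \<Rightarrow> int" where
  "resv L a y x = foldr (\<lambda>p acc. min (self L a y x (cand a y x p)) acc)
      (List.product (subseqs L) (subseqs L)) (bigv L a y)"

lemma foldr_min_ge: "(\<forall>p\<in>set ps. m \<le> h p) \<Longrightarrow> (m::int) \<le> b \<Longrightarrow> m \<le> foldr (\<lambda>p acc. min (h p) acc) ps b"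
  by (induction ps) auto
lemma foldr_min_le: "p \<in> set ps \<Longrightarrow> foldr (\<lambda>p acc. min (h p) acc) ps b \<le> (h p::int)"
  by (induction ps) auto

lemma gf_mono: "c \<le> d \<Longrightarrow> gf L a y c \<le> gf L a y d"
  unfolding gf_def by (intro sum_mono) auto

lemma gf_nonpos: "\<forall>i\<in>set L. 0 \<le> a i \<and> 0 \<le> y i \<Longrightarrow> c \<le> 0 \<Longrightarrow> gf L a y c = 0"
  unfolding gf_def by (intro sum.neutral) auto

lemma main_math:
  assumes dL: "distinct L" and nn: "\<forall>i\<in>set L. 0 \<le> a i \<and> 0 \<le> y i"
    and x0: "0 < x" and xle: "x \<le> (\<Sum>i\<leftarrow>L. y i)"
  shows "\<exists>t::nat. x \<le> gf L a y (int t) \<and> (\<forall>s::nat. x \<le> gf L a y (int s) \<longrightarrow> t \<le> s)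
             \<and> resv L a y x = int t"
proof -
  let ?g = "gf L a y"
  define B where "B = bigv L a y"
  have sumL: "(\<Sum>i\<leftarrow>L. f i) = (\<Sum>i\<in>set L. f i)" for f :: "nat \<Rightarrow> int"
    using dL by (simp add: sum_list_distinct_conv_sum_set)
  have Bge: "a i + y i \<le> B" if "i \<in> set L" for i
  proof -
    have "a i + y i \<le> (\<Sum>j\<in>set L. a j + y j)"
      using that nn by (intro member_le_sum) auto
    then show ?thesis by (simp add: B_def bigv_def sumL)
  qed
  have B0: "0 \<le> B" unfolding B_def bigv_def sumL using nn by (intro sum_nonneg) auto
  have gB: "?g B = (\<Sum>i\<in>set L. y i)"
    unfolding gf_def
  proof (rule sum.cong)
    fix i assume "i \<in> set L"
    then show "min (max 0 (B - a i)) (y i) = y i" using Bge[of i] nn by auto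
  qed simp
  have ex: "x \<le> ?g (int (nat B))" using gB xle B0 sumL by simp
  define t where "t = (LEAST t::nat. x \<le> ?g (int t))"
  have tx: "x \<le> ?g (int t)" unfolding t_def by (rule LeastI, rule ex)
  have tmin: "\<forall>s::nat. x \<le> ?g (int s) \<longrightarrow> t \<le> s" unfolding t_def by (auto intro: Least_le)
  have t1: "t \<ge> 1"
  proof (rule ccontr)
    assume "\<not> t \<ge> 1" then have "t = 0" by simp
    then show False using tx gf_nonpos[OF nn, of 0] x0 by simp
  qed
  have tprev: "?g (int t - 1) < x"
  proof -
    have "\<not> x \<le> ?g (int (t - 1))" unfolding t_def by (rule not_less_Least) (use t1 t_def in simp)
    then show ?thesis using t1 by (simp add: of_nat_diff)
  qed
  define T where "T = int t"
  define S where "S = {i\<in>set L. a i < T \<and> T \<le> a i + y i}"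
  define F where "F = {i\<in>set L. a i + y i < T}"
  have SF: "S \<subseteq> set L" "F \<subseteq> set L" "S \<inter> F = {}" unfolding S_def F_def by auto
  have finS: "finite S" "finite F" unfolding S_def F_def by auto
  have gs: "?g s = (\<Sum>i\<in>S. s - a i) + (\<Sum>i\<in>F. y i)" if "s = T \<or> s = T - 1" for s
  proof -
    have "?g s = (\<Sum>i\<in>set L. (if i \<in> S then s - a i else 0) + (if i \<in> F then y i else 0))"
      unfolding gf_def
    proof (rule sum.cong)
      fix i assume "i \<in> set L"
      then show "min (max 0 (s - a i)) (y i) = (if i \<in> S then s - a i else 0) + (if i \<in> F then y i else 0)"
        using that nn unfolding S_def F_def by auto
    qed simp
    also have "\<dots> = (\<Sum>i\<in>set L. if i \<in> S then s - a i else 0) + (\<Sum>i\<in>set L. if i \<in> F then y i else 0)"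
      by (rule sum.distrib)
    also have "\<dots> = (\<Sum>i\<in>S. s - a i) + (\<Sum>i\<in>F. y i)"
      using SF by (simp add: sum.inter_restrict[symmetric] Int_absorb1 Int_absorb2 Int_commute)
    finally show ?thesis .
  qed
  define n where "n = int (card S)"
  define A where "A = (\<Sum>i\<in>S. a i)"
  define Y where "Y = (\<Sum>i\<in>F. y i)"
  have lin: "(\<Sum>i\<in>S. s - a i) = n * s - A" for s
    by (simp add: n_def A_def sum_subtractf)
  have gT: "?g T = n*T - A + Y" using gs[of T] lin Y_def by simp
  have gT1: "?g (T-1) = n*(T-1) - A + Y" using gs[of "T-1"] lin Y_def by simp
  define N where "N = x - Y + A"
  have h1: "N \<le> n*T" using tx gT unfolding N_def T_def by simp
  have h2: "n*(T-1) < N" using tprev gT1 unfolding N_def T_def by simp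
  have npos: "n > 0"
  proof (rule ccontr)
    assume "\<not> n > 0" then have "n = 0" unfolding n_def by simp
    then show False using h1 h2 by simp
  qed
  obtain Sl where Sl: "Sl \<in> set (subseqs L)" "set Sl = S" using subset_subseqs[OF SF(1)] by auto
  obtain Fl where Fl: "Fl \<in> set (subseqs L)" "set Fl = F" using subset_subseqs[OF SF(2)] by auto
  have dS: "distinct Sl" "distinct Fl" using Sl Fl dL subseqs_distinctD by auto
  have candT: "cand a y x (Sl, Fl) = T"
  proof -
    have "length Sl = card S" using dS Sl distinct_card by fastforce
    moreover have "(\<Sum>i\<leftarrow>Sl. a i) = A" using dS Sl A_def by (simp add: sum_list_distinct_conv_sum_set)
    moreover have "(\<Sum>i\<leftarrow>Fl. y i) = Y" using dS Fl Y_def by (simp add: sum_list_distinct_conv_sum_set)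
    ultimately have "cand a y x (Sl, Fl) = (N + n - 1) div n"
      by (simp add: cand_def N_def n_def)
    also have "\<dots> = T" using divlem[OF npos h2 h1] .
    finally show ?thesis .
  qed
  have mem: "(Sl, Fl) \<in> set (List.product (subseqs L) (subseqs L))" using Sl Fl by simp
  have selT: "self L a y x T = T" using tx by (simp add: self_def T_def)
  have tB: "t \<le> nat B" using tmin ex by auto
  have lower: "T \<le> self L a y x c" for c
  proof (cases "?g c - x \<ge> 0")
    case True
    have "c > 0"
    proof (rule ccontr)
      assume "\<not> c > 0" then show False using True gf_nonpos[OF nn, of c] x0 by simp
    qed
    then have "x \<le> ?g (int (nat c))" using True by simp
    then have "t \<le> nat c" using tmin by auto
    then show ?thesis using True \<open>c > 0\<close> by (simp add: self_def T_def)
  next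
    case False
    then show ?thesis using tB B0 by (simp add: self_def T_def B_def)
  qed
  have "resv L a y x = T"
  proof (rule antisym)
    show "resv L a y x \<le> T" unfolding resv_def
      using foldr_min_le[OF mem, of "\<lambda>p. self L a y x (cand a y x p)"] candT selT by simp
    show "T \<le> resv L a y x" unfolding resv_def
      by (rule foldr_min_ge) (use lower tB B0 B_def T_def in auto)
  qed
  then show ?thesis using tx tmin T_def by blast
qed



definition eg :: "nat list \<Rightarrow> expr \<Rightarrow> expr" where
  "eg L c = esum (\<lambda>i. emin (emax0 (Sub c (TauIn i))) (YIn i)) L"
definition ebig :: "nat list \<Rightarrow> expr" where
  "ebig L = esum (\<lambda>i. Add (TauIn i) (YIn i)) L"
definition esel :: "nat list \<Rightarrow> expr \<Rightarrow> expr" where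
  "esel L c = Add (Mul (eind (Sub (eg L c) XIn)) c)
                  (Mul (Sub (Const 1) (eind (Sub (eg L c) XIn))) (ebig L))"
definition ecand :: "nat list \<times> nat list \<Rightarrow> expr" where
  "ecand p = Div (Add (Add (Sub XIn (esum YIn (snd p))) (esum TauIn (fst p)))
                      (Const (int (length (fst p)) - 1))) (Const (int (length (fst p))))"
definition eres :: "nat list \<Rightarrow> expr" where
  "eres L = foldr (\<lambda>p acc. emin (esel L (ecand p)) acc) (List.product (subseqs L) (subseqs L)) (ebig L)"
definition leaf :: "nat list \<Rightarrow> prog" where
  "leaf L = Branch (Le XIn (Const 0)) (Out (Const 0))
              (Branch (Le XIn (esum YIn L)) (Out (eres L)) OutInf)"

function build :: "nat \<Rightarrow> nat \<Rightarrow> nat list \<Rightarrow> prog" where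
  "build k i L = (if i < k then Branch (IsInf i) (build k (Suc i) L) (build k (Suc i) (i # L))
                 else leaf L)"
  by pat_completeness auto
termination by (relation "measure (\<lambda>(k,i,L). k - i)") auto

declare build.simps[simp del]

context
  fixes x :: nat and ns :: "(enat \<times> nat) list"
begin

abbreviation "aa \<equiv> (\<lambda>i. eeval (TauIn i) x ns)"
abbreviation "yy \<equiv> (\<lambda>i. eeval (YIn i) x ns)"

lemma eeval_eg: "distinct L \<Longrightarrow> eeval (eg L c) x ns = gf L aa yy (eeval c x ns)"
  by (simp add: eg_def eeval_esum eeval_emin eeval_emax0 gf_def sum_list_distinct_conv_sum_set del: eeval.simps(3,4))

lemma eeval_ebig: "eeval (ebig L) x ns = bigv L aa yy"
  by (simp add: ebig_def eeval_esum bigv_def del: eeval.simps(3,4))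

lemma eeval_esel: "distinct L \<Longrightarrow> eeval (esel L c) x ns = self L aa yy (int x) (eeval c x ns)"
  by (simp add: esel_def eeval_eind eeval_eg eeval_ebig self_def del: eeval.simps(3,4))

lemma eeval_ecand: "eeval (ecand p) x ns = cand aa yy (int x) p"
  unfolding ecand_def cand_def by (simp only: eeval.simps eeval_esum) (simp add: algebra_simps del: eeval.simps(3,4))

lemma eeval_eres: "distinct L \<Longrightarrow> eeval (eres L) x ns = resv L aa yy (int x)"
proof -
  assume d: "distinct L"
  have "eeval (foldr (\<lambda>p acc. emin (esel L (ecand p)) acc) ps (ebig L)) x ns
        = foldr (\<lambda>p acc. min (self L aa yy (int x) (cand aa yy (int x) p)) acc) ps (bigv L aa yy)" for ps
    by (induction ps) (simp_all add: eeval_emin eeval_esel[OF d] eeval_ecand eeval_ebig del: eeval.simps(3,4))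
  then show ?thesis by (simp add: eres_def resv_def)
qed

end



lemma build_correct:
  "length ns = k \<Longrightarrow> distinct L \<Longrightarrow> set L \<subseteq> {..<i} \<Longrightarrow>
   \<exists>L'. distinct L' \<and> set L' = set L \<union> {j. i \<le> j \<and> j < k \<and> fst (ns!j) \<noteq> \<infinity>}
        \<and> run (build k i L) x ns = run (leaf L') x ns"
proof (induction k i L rule: build.induct)
  case (1 k i L)
  show ?case
  proof (cases "i < k")
    case False
    then have "{j. i \<le> j \<and> j < k \<and> fst (ns!j) \<noteq> \<infinity>} = {}" by auto
    then show ?thesis using False 1(3,4) by (subst build.simps) auto
  next
    case True
    show ?thesis
    proof (cases "fst (ns!i) = \<infinity>")
      case inf: True
      obtain L' where L': "distinct L'" "set L' = set L \<union> {j. Suc i \<le> j \<and> j < k \<and> fst (ns!j) \<noteq> \<infinity>}"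
        "run (build k (Suc i) L) x ns = run (leaf L') x ns"
        using 1(1)[OF True 1(3,4)] 1(5) by (meson lessThan_iff less_SucI subset_iff)
      have "{j. i \<le> j \<and> j < k \<and> fst (ns!j) \<noteq> \<infinity>} = {j. Suc i \<le> j \<and> j < k \<and> fst (ns!j) \<noteq> \<infinity>}"
        using inf by (auto simp: Suc_le_eq le_less)
      then have "set L' = set L \<union> {j. i \<le> j \<and> j < k \<and> fst (ns!j) \<noteq> \<infinity>}"
        using L'(2) by simp
      then show ?thesis using L' True inf 1(3) by (subst build.simps) auto
    next
      case fin: False
      have d: "distinct (i # L)" using 1(4,5) by auto
      have sub: "set (i # L) \<subseteq> {..<Suc i}" using 1(5) by auto
      obtain L' where L': "distinct L'" "set L' = set (i#L) \<union> {j. Suc i \<le> j \<and> j < k \<and> fst (ns!j) \<noteq> \<infinity>}"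
        "run (build k (Suc i) (i#L)) x ns = run (leaf L') x ns"
        using 1(2)[OF True 1(3) d sub] by blast
      have "{j. i \<le> j \<and> j < k \<and> fst (ns!j) \<noteq> \<infinity>} = insert i {j. Suc i \<le> j \<and> j < k \<and> fst (ns!j) \<noteq> \<infinity>}"
        using fin True by (auto simp: Suc_le_eq le_less)
      then have "set L' = set L \<union> {j. i \<le> j \<and> j < k \<and> fst (ns!j) \<noteq> \<infinity>}"
        using L'(2) by simp
      then show ?thesis using L' True fin 1(3) by (subst build.simps) auto
    qed
  qed
qed

lemma tau_val_nn: "0 \<le> tau_val e" by (cases e) auto

lemma contrib_nn: "0 \<le> contrib t p" by (simp add: contrib_def split: enat.split)

lemma sum_contrib:
  assumes d: "distinct L" and sL: "set L = {j. j < length ns \<and> fst (ns!j) \<noteq> \<infinity>}"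
  shows "sum_list (map (contrib t) ns) = gf L (\<lambda>i. eeval (TauIn i) x ns) (\<lambda>i. eeval (YIn i) x ns) (int t)"
proof -
  have "sum_list (map (contrib t) ns) = (\<Sum>j\<in>{0..<length ns}. contrib t (ns!j))"
    unfolding sum_list_sum_nth by simp
  also have "\<dots> = (\<Sum>j\<in>set L. contrib t (ns!j))"
  proof (rule sum.mono_neutral_right)
    show "set L \<subseteq> {0..<length ns}" unfolding sL by auto
    have "contrib t (ns ! j) = 0" if "j \<in> {0..<length ns} - set L" for j
    proof -
      have "fst (ns!j) = \<infinity>" using that unfolding sL by simp
      then show ?thesis by (simp add: contrib_def)
    qed
    then show "\<forall>j\<in>{0..<length ns} - set L. contrib t (ns ! j) = 0" by blast
  qed simp
  also have "\<dots> = gf L (\<lambda>i. eeval (TauIn i) x ns) (\<lambda>i. eeval (YIn i) x ns) (int t)"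
    unfolding gf_def
  proof (rule sum.cong)
    fix j assume j: "j \<in> set L"
    then have jl: "j < length ns" and f: "fst (ns!j) \<noteq> \<infinity>" unfolding sL by auto
    then obtain a where a: "fst (ns!j) = enat a" by auto
    show "contrib t (ns ! j) = min (max 0 (int t - eeval (TauIn j) x ns)) (eeval (YIn j) x ns)"
      using jl a by (auto simp: contrib_def)
  qed simp
  finally show ?thesis .
qed

lemma leaf_correct:
  assumes d: "distinct L" and sL: "set L = {j. j < length ns \<and> fst (ns!j) \<noteq> \<infinity>}"
  shows "case run (leaf L) x ns of None \<Rightarrow> ign_time x ns = \<infinity>
           | Some v \<Rightarrow> v \<ge> 0 \<and> ign_time x ns = enat (nat v)"
proof -
  let ?a = "\<lambda>i. eeval (TauIn i) x ns" and ?y = "\<lambda>i. eeval (YIn i) x ns"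
  have sc: "sum_list (map (contrib t) ns) = gf L ?a ?y (int t)" for t using sum_contrib[OF d sL] .
  have nn: "\<forall>i\<in>set L. 0 \<le> ?a i \<and> 0 \<le> ?y i" by (auto simp: tau_val_nn)
  consider "x = 0" | "x > 0" "int x \<le> eeval (esum YIn L) x ns" | "\<not> int x \<le> eeval (esum YIn L) x ns"
    by fastforce
  then show ?thesis
  proof cases
    case 1
    have "int x \<le> sum_list (map (contrib 0) ns)" using 1 by (simp, intro sum_list_nonneg) (auto simp: contrib_nn)
    then have "ign_time x ns = enat 0" unfolding ign_time_def using 1
      by (auto intro!: Least_eq_0)
    then show ?thesis using 1 by (simp add: leaf_def zero_enat_def)
  next
    case 2
    have xle: "int x \<le> (\<Sum>i\<leftarrow>L. ?y i)" using 2 by (simp add: eeval_esum del: eeval.simps(4))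
    obtain t where t: "int x \<le> gf L ?a ?y (int t)" "\<forall>s::nat. int x \<le> gf L ?a ?y (int s) \<longrightarrow> t \<le> s"
      "resv L ?a ?y (int x) = int t"
      using main_math[OF d nn _ xle] 2 by auto
    have "(LEAST t. int x \<le> sum_list (map (contrib t) ns)) = t"
      by (rule Least_equality) (use t sc in auto)
    then have "ign_time x ns = enat t" unfolding ign_time_def using t sc by auto
    then show ?thesis using 2 t by (simp add: leaf_def eeval_eres[OF d] del: eeval.simps(3,4))
  next
    case 3
    have "gf L ?a ?y c \<le> (\<Sum>i\<leftarrow>L. ?y i)" for c
      unfolding gf_def using d by (simp add: sum_list_distinct_conv_sum_set sum_mono del: eeval.simps(3,4))
    then have "\<not> (\<exists>t. int x \<le> sum_list (map (contrib t) ns))" using 3 sc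
      by (auto simp: eeval_esum simp del: eeval.simps(3,4)) (smt (verit))
    moreover have "0 \<le> eeval (esum YIn L) x ns"
      by (simp add: eeval_esum del: eeval.simps(4), intro sum_list_nonneg) auto
    then have "\<not> int x \<le> 0" using 3 by linarith
    then have "run (leaf L) x ns = None" using 3 unfolding leaf_def run.simps ceval.simps
      by (simp only: eeval.simps(1,2) if_False)
    ultimately show ?thesis by (simp add: ign_time_def)
  qed
qed

theorem lemma4:
  shows "\<exists>C::nat. \<forall>k\<le>6. \<exists>P. cost P \<le> C \<and>
           (\<forall>x ns. length ns = k \<longrightarrow>
              (case run P x ns of None \<Rightarrow> ign_time x ns = \<infinity>
                                | Some v \<Rightarrow> v \<ge> 0 \<and> ign_time x ns = enat (nat v)))"
proof -
  let ?C = "Max ((\<lambda>k. cost (build k 0 [])) ` {..6})"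
  have "\<forall>k\<le>6. \<exists>P. cost P \<le> ?C \<and>
           (\<forall>x ns. length ns = k \<longrightarrow>
              (case run P x ns of None \<Rightarrow> ign_time x ns = \<infinity>
                                | Some v \<Rightarrow> v \<ge> 0 \<and> ign_time x ns = enat (nat v)))"
  proof (intro allI impI)
  fix k :: nat assume k: "k \<le> 6"
  show "\<exists>P. cost P \<le> ?C \<and> (\<forall>x ns. length ns = k \<longrightarrow>
              (case run P x ns of None \<Rightarrow> ign_time x ns = \<infinity>
                                | Some v \<Rightarrow> v \<ge> 0 \<and> ign_time x ns = enat (nat v)))"
  proof (intro exI conjI allI impI)
    show "cost (build k 0 []) \<le> ?C" using k by (intro Max_ge) auto
    fix x and ns :: "(enat \<times> nat) list" assume len: "length ns = k"
    obtain L' where L': "distinct L'" "set L' = {j. 0 \<le> j \<and> j < k \<and> fst (ns!j) \<noteq> \<infinity>}"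
        "run (build k 0 []) x ns = run (leaf L') x ns"
      using build_correct[OF len, of "[]" 0 x] by auto
    have "set L' = {j. j < length ns \<and> fst (ns!j) \<noteq> \<infinity>}" using L'(2) len by auto
    from leaf_correct[OF L'(1) this, of x] L'(3)
    show "case run (build k 0 []) x ns of None \<Rightarrow> ign_time x ns = \<infinity>
           | Some v \<Rightarrow> v \<ge> 0 \<and> ign_time x ns = enat (nat v)" by simp
  qed
  qed
  then show ?thesis by blast
qed

end
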